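(* Let $R=\bigoplus_{i\ge 0}R_i$ be a graded domain of Krull dimension $d$. Let $S\subset R_0$ be a multiplicative set such that $S\cap \mathfrak m\neq\emptyset$ for every maximal ideal $\mathfrak m$ of $R_0$. Then the graded ring $S^{-1}R=\bigoplus_{i\ge0}S^{-1}R_i$ has no graded maximal ideal of the form $S^{-1}\mathfrak M$ with $\mathfrak M$ a maximal ideal of $R$. Consequently $\dim(S^{-1}R)<d$.
   Context: All rings are commutative Noetherian with $1\neq 0$ and of finite Krull dimension. A graded ring means a ring $R=\bigoplus_{i\ge0}R_i$ with a non-trivial $\mathbb N$-grading, i.e. the irrelevant ideal $R_+=\bigoplus_{i\ge1}R_i$ is nonzero. *)

theory Defs
  imports Main "HOL-Library.Extended_Nat"
begin

definition ideal_in :: "'a::comm_ring_1 set \<Rightarrow> 'a set \<Rightarrow> bool" where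
  "ideal_in A I \<longleftrightarrow> I \<subseteq> A \<and> 0 \<in> I \<and> (\<forall>x\<in>I. \<forall>y\<in>I. x + y \<in> I) \<and> (\<forall>x\<in>I. - x \<in> I)
     \<and> (\<forall>r\<in>A. \<forall>x\<in>I. r * x \<in> I)"

definition maximal_ideal_in :: "'a::comm_ring_1 set \<Rightarrow> 'a set \<Rightarrow> bool" where
  "maximal_ideal_in A I \<longleftrightarrow> ideal_in A I \<and> I \<noteq> A \<and>
     (\<forall>J. ideal_in A J \<and> I \<subseteq> J \<longrightarrow> J = I \<or> J = A)"

abbreviation is_ideal :: "'a::comm_ring_1 set \<Rightarrow> bool" where
  "is_ideal I \<equiv> ideal_in UNIV I"

abbreviation maximal_ideal :: "'a::comm_ring_1 set \<Rightarrow> bool" where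
  "maximal_ideal I \<equiv> maximal_ideal_in UNIV I"

definition prime_ideal :: "'a::comm_ring_1 set \<Rightarrow> bool" where
  "prime_ideal P \<longleftrightarrow> is_ideal P \<and> P \<noteq> UNIV \<and> (\<forall>a b. a * b \<in> P \<longrightarrow> a \<in> P \<or> b \<in> P)"

definition noetherian_ring :: "'a::comm_ring_1 itself \<Rightarrow> bool" where
  "noetherian_ring _ \<longleftrightarrow> (\<forall>I :: nat \<Rightarrow> 'a set. (\<forall>n. is_ideal (I n)) \<and> (\<forall>n. I n \<subseteq> I (Suc n))
      \<longrightarrow> (\<exists>n. \<forall>m\<ge>n. I m = I n))"

definition krull_dim :: "'a::comm_ring_1 itself \<Rightarrow> enat" where
  "krull_dim _ = Sup {enat n | n. \<exists>C :: nat \<Rightarrow> 'a set.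
      (\<forall>i\<le>n. prime_ideal (C i)) \<and> (\<forall>i<n. C i \<subset> C (Suc i))}"

definition hom_decomp :: "(nat \<Rightarrow> 'a::comm_ring_1 set) \<Rightarrow> 'a \<Rightarrow> (nat \<Rightarrow> 'a) \<Rightarrow> bool" where
  "hom_decomp G x c \<longleftrightarrow> (\<forall>i. c i \<in> G i) \<and> finite {i. c i \<noteq> 0} \<and> x = sum c {i. c i \<noteq> 0}"

definition graded_ring :: "(nat \<Rightarrow> 'a::comm_ring_1 set) \<Rightarrow> bool" where
  "graded_ring G \<longleftrightarrow>
     (\<forall>i. 0 \<in> G i \<and> (\<forall>x\<in>G i. \<forall>y\<in>G i. x + y \<in> G i) \<and> (\<forall>x\<in>G i. - x \<in> G i)) \<and>
     (\<forall>i j. \<forall>x\<in>G i. \<forall>y\<in>G j. x * y \<in> G (i + j)) \<and>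
     1 \<in> G 0 \<and>
     (\<forall>x. \<exists>!c. hom_decomp G x c) \<and>
     (\<exists>i\<ge>1. G i \<noteq> {0})"

definition homogeneous_ideal :: "(nat \<Rightarrow> 'a::comm_ring_1 set) \<Rightarrow> 'a set \<Rightarrow> bool" where
  "homogeneous_ideal G I \<longleftrightarrow> is_ideal I \<and> (\<forall>x\<in>I. \<forall>c. hom_decomp G x c \<longrightarrow> (\<forall>i. c i \<in> I))"

definition multiplicative_set :: "'a::comm_ring_1 set \<Rightarrow> bool" where
  "multiplicative_set S \<longleftrightarrow> 1 \<in> S \<and> (\<forall>s\<in>S. \<forall>t\<in>S. s * t \<in> S)"

text \<open>phi : R -> B exhibits B as the localization S^{-1}R (standard characterisation,
  as Mathlib's IsLocalization).\<close>
definition is_localization :: "'a::comm_ring_1 set \<Rightarrow> ('a \<Rightarrow> 'b::comm_ring_1) \<Rightarrow> bool" where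
  "is_localization S \<phi> \<longleftrightarrow>
     \<phi> 1 = 1 \<and> (\<forall>x y. \<phi> (x + y) = \<phi> x + \<phi> y) \<and> (\<forall>x y. \<phi> (x * y) = \<phi> x * \<phi> y) \<and>
     (\<forall>s\<in>S. \<phi> s dvd 1) \<and>
     (\<forall>b. \<exists>r. \<exists>s\<in>S. \<phi> s * b = \<phi> r) \<and>
     (\<forall>r. \<phi> r = 0 \<longleftrightarrow> (\<exists>s\<in>S. s * r = 0))"

text \<open>The set S^{-1}X = { r/s : r in X, s in S } inside the localization.\<close>
definition loc_set :: "'a::comm_ring_1 set \<Rightarrow> ('a \<Rightarrow> 'b::comm_ring_1) \<Rightarrow> 'a set \<Rightarrow> 'b set" where
  "loc_set S \<phi> X = {b. \<exists>r\<in>X. \<exists>s\<in>S. \<phi> s * b = \<phi> r}"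

end

theory Submission
  imports Defs
begin


lemma sum_in_group:
  assumes "0 \<in> A" "\<forall>x\<in>A. \<forall>y\<in>A. x + y \<in> A" "finite I" "\<forall>i\<in>I. f i \<in> A"
  shows "sum f I \<in> A"
  using assms(3,4) by (induction I rule: finite_induct) (auto simp: assms(1,2))

locale gr =
  fixes G :: "nat \<Rightarrow> 'a::idom set"
  assumes graded: "graded_ring G"
begin

lemma G0: "0 \<in> G i" and Gadd: "x \<in> G i \<Longrightarrow> y \<in> G i \<Longrightarrow> x + y \<in> G i"
  and Gneg: "x \<in> G i \<Longrightarrow> - x \<in> G i"
  and Gmul: "x \<in> G i \<Longrightarrow> y \<in> G j \<Longrightarrow> x * y \<in> G (i + j)"
  and G1: "1 \<in> G 0" and Gex1: "\<exists>!c. hom_decomp G x c"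
  and Gnontriv: "\<exists>i\<ge>1. G i \<noteq> {0}"
  using graded unfolding graded_ring_def by blast+

lemma Gdiff: "x \<in> G i \<Longrightarrow> y \<in> G i \<Longrightarrow> x - y \<in> G i"
  using Gadd[of x i "-y"] Gneg[of y i] by simp

lemma Gsum: "finite I \<Longrightarrow> (\<forall>j\<in>I. f j \<in> G i) \<Longrightarrow> sum f I \<in> G i"
  using sum_in_group[of "G i" I f] G0 Gadd by blast

definition cp :: "'a \<Rightarrow> nat \<Rightarrow> 'a" where
  "cp x = (THE c. hom_decomp G x c)"

lemma cp_hd: "hom_decomp G x (cp x)"
  unfolding cp_def using Gex1[of x] by (rule theI')

lemma cp_G: "cp x i \<in> G i"
  using cp_hd[of x] unfolding hom_decomp_def by blast

lemma cp_fin: "finite {i. cp x i \<noteq> 0}"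
  using cp_hd[of x] unfolding hom_decomp_def by blast

lemma cp_bound: "\<exists>N. \<forall>i\<ge>N. cp x i = 0"
proof -
  obtain N where N: "{i. cp x i \<noteq> 0} \<subseteq> {..<N}"
    using finite_nat_bounded[OF cp_fin[of x]] by blast
  show ?thesis
  proof (intro exI allI impI)
    fix i assume "N \<le> i"
    show "cp x i = 0"
    proof (rule ccontr)
      assume "cp x i \<noteq> 0"
      then have "i \<in> {..<N}" using N by blast
      then show False using \<open>N \<le> i\<close> by simp
    qed
  qed
qed

lemma supp_sub: fixes N :: nat assumes "\<forall>i\<ge>N. c i = 0" shows "{i. c i \<noteq> 0} \<subseteq> {..<N}"
proof
  fix i assume "i \<in> {i. c i \<noteq> 0}"
  then have "c i \<noteq> 0" by simp
  then have "\<not> N \<le> i" using assms by blast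
  then show "i \<in> {..<N}" by (simp add: not_le)
qed

lemma sum_supp_eq:
  fixes N :: nat
  assumes "\<forall>i\<ge>N. c i = 0"
  shows "sum c {i. c i \<noteq> 0} = (\<Sum>i<N. c i)"
proof -
  have sub: "{i. c i \<noteq> 0} \<subseteq> {..<N}" using supp_sub[OF assms] .
  show ?thesis by (rule sum.mono_neutral_left) (use sub in auto)
qed

lemma cp_sum: assumes "\<forall>i\<ge>N. cp x i = 0" shows "x = (\<Sum>i<N. cp x i)"
  using cp_hd[of x] sum_supp_eq[OF assms] unfolding hom_decomp_def by simp

lemma cp_unique:
  fixes N :: nat
  assumes "\<forall>i. c i \<in> G i" "\<forall>i\<ge>N. c i = 0" "x = (\<Sum>i<N. c i)"
  shows "cp x = c"
proof -
  have "hom_decomp G x c"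
    unfolding hom_decomp_def
  proof (intro conjI)
    have "{i. c i \<noteq> 0} \<subseteq> {..<N}" using supp_sub[OF assms(2)] .
    then show "finite {i. c i \<noteq> 0}" using finite_subset finite_lessThan by blast
    show "x = sum c {i. c i \<noteq> 0}" using sum_supp_eq[OF assms(2)] assms(3) by simp
  qed (use assms(1) in auto)
  then show ?thesis using Gex1[of x] cp_hd[of x] by blast
qed

lemma cp_bound2: "\<exists>N. (\<forall>i\<ge>N. cp x i = 0) \<and> (\<forall>i\<ge>N. cp y i = 0)"
proof -
  obtain N1 N2 where "\<forall>i\<ge>N1. cp x i = 0" "\<forall>i\<ge>N2. cp y i = 0" using cp_bound by blast
  then show ?thesis by (intro exI[of _ "max N1 N2"]) auto
qed

lemma cp_add: "cp (x + y) i = cp x i + cp y i"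
proof -
  obtain N where N: "\<forall>i\<ge>N. cp x i = 0" "\<forall>i\<ge>N. cp y i = 0" using cp_bound2 by blast
  have "cp (x + y) = (\<lambda>i. cp x i + cp y i)"
    by (rule cp_unique[where N=N]) (use N cp_sum[OF N(1)] cp_sum[OF N(2)] in
        \<open>auto simp: Gadd cp_G sum.distrib\<close>)
  then show ?thesis by simp
qed

lemma cp_hom: assumes "a \<in> G k" shows "cp a = (\<lambda>i. if i = k then a else 0)"
  by (rule cp_unique[where N="Suc k"]) (use assms G0 in auto)

lemma cp_0: "cp 0 i = 0"
  using cp_hom[OF G0[of 0]] by simp

lemma cp_neg: "cp (- x) i = - cp x i"
  using cp_add[of x "-x" i] cp_0[of i] by (metis add.right_inverse neg_eq_iff_add_eq_0)

lemma cp_diff: "cp (x - y) i = cp x i - cp y i"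
  using cp_add[of x "-y" i] cp_neg[of y i] by simp

lemma cp_sumset: "finite I \<Longrightarrow> cp (sum f I) i = (\<Sum>j\<in>I. cp (f j) i)"
  by (induction I rule: finite_induct) (auto simp: cp_0 cp_add)

lemma cp_mult: "cp (x * y) n = (\<Sum>i\<le>n. cp x i * cp y (n - i))"
proof -
  obtain N where N: "\<forall>i\<ge>N. cp x i = 0" "\<forall>i\<ge>N. cp y i = 0" using cp_bound2 by blast
  define c where "c = (\<lambda>n. \<Sum>i\<le>n. cp x i * cp y (n - i))"
  have cG: "\<forall>n. c n \<in> G n"
    unfolding c_def by (auto intro!: Gsum) (metis Gmul cp_G le_add_diff_inverse)
  have c0: "\<forall>n\<ge>2*N. c n = 0"
  proof (intro allI impI)
    fix n :: nat assume n: "2*N \<le> n"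
    have "cp x i * cp y (n - i) = 0" for i
    proof (cases "i < N")
      case True
      then have "N \<le> n - i" using n by simp
      then show ?thesis using N(2) by simp
    next
      case False
      then show ?thesis using N(1) by simp
    qed
    then show "c n = 0" unfolding c_def by (intro sum.neutral) blast
  qed
  have "x * y = (\<Sum>i<N. cp x i) * (\<Sum>j<N. cp y j)"
    using cp_sum[OF N(1)] cp_sum[OF N(2)] by simp
  also have "\<dots> = (\<Sum>(i,j)\<in>{..<N}\<times>{..<N}. cp x i * cp y j)"
    by (simp add: sum_product sum.cartesian_product)
  also have "\<dots> = (\<Sum>(i,j)\<in>{(i,j). i + j < 2*N}. cp x i * cp y j)"
  proof (rule sum.mono_neutral_left)
    show "finite {(i, j). i + j < 2 * N}"
      by (rule finite_subset[of _ "{..<2*N} \<times> {..<2*N}"]) auto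
    show "{..<N} \<times> {..<N} \<subseteq> {(i, j). i + j < 2 * N}" by auto
    show "\<forall>i\<in>{(i, j). i + j < 2 * N} - {..<N} \<times> {..<N}. (case i of (i, j) \<Rightarrow> cp x i * cp y j) = 0"
      using N by (auto simp: not_less) (meson not_less)+
  qed
  also have "\<dots> = (\<Sum>n<2*N. c n)"
    unfolding c_def by (rule sum.triangle_reindex)
  finally have "cp (x * y) = c" by (intro cp_unique[where N="2*N"] cG c0)
  then show ?thesis unfolding c_def by simp
qed

end


lemma idealD:
  assumes "is_ideal I"
  shows "0 \<in> I" "x \<in> I \<Longrightarrow> y \<in> I \<Longrightarrow> x + y \<in> I" "x \<in> I \<Longrightarrow> - x \<in> I"
    "x \<in> I \<Longrightarrow> r * x \<in> I"
  using assms unfolding ideal_in_def by blast+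

lemma ideal_diff: "is_ideal I \<Longrightarrow> x \<in> I \<Longrightarrow> y \<in> I \<Longrightarrow> x - y \<in> I"
  using idealD(2)[of I x "-y"] idealD(3)[of I y] by simp

lemma ideal_multR: "is_ideal I \<Longrightarrow> x \<in> I \<Longrightarrow> x * r \<in> I"
  using idealD(4)[of I x r] by (simp add: mult.commute)

lemma ideal_sum: "is_ideal I \<Longrightarrow> finite K \<Longrightarrow> (\<forall>j\<in>K. f j \<in> I) \<Longrightarrow> sum f K \<in> I"
  using sum_in_group[of I K f] idealD(1,2)[of I] by blast

lemma ideal_sum_notin:
  assumes "is_ideal I" "finite K" "k \<in> K" "f k \<notin> I" "\<forall>j\<in>K-{k}. f j \<in> I"
  shows "sum f K \<notin> I"
proof
  assume s: "sum f K \<in> I"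
  have "sum f K = f k + sum f (K - {k})" using assms(2,3) by (simp add: sum.remove)
  moreover have "sum f (K - {k}) \<in> I" using ideal_sum[OF assms(1)] assms(2,5) by blast
  ultimately have "f k = sum f K - sum f (K - {k})" by simp
  then have "f k \<in> I" using ideal_diff[OF assms(1) s \<open>sum f (K - {k}) \<in> I\<close>] by simp
  then show False using assms(4) by simp
qed

lemma prime_idealD:
  assumes "prime_ideal P"
  shows "is_ideal P" "1 \<notin> P" "a * b \<in> P \<Longrightarrow> a \<in> P \<or> b \<in> P"
proof -
  show "is_ideal P" using assms unfolding prime_ideal_def by blast
  show "1 \<notin> P"
  proof
    assume "1 \<in> P"
    then have "\<forall>r. r \<in> P" using idealD(4)[OF \<open>is_ideal P\<close>, of 1] by simp
    then show False using assms unfolding prime_ideal_def by blast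
  qed
  show "a * b \<in> P \<Longrightarrow> a \<in> P \<or> b \<in> P" using assms unfolding prime_ideal_def by blast
qed

lemma prime_idealI:
  assumes "is_ideal P" "1 \<notin> P" "\<And>a b. a * b \<in> P \<Longrightarrow> a \<in> P \<or> b \<in> P"
  shows "prime_ideal P"
  using assms unfolding prime_ideal_def by blast

context gr begin

lemma cp_homL:
  assumes "a \<in> G k"
  shows "cp (a * y) n = (if k \<le> n then a * cp y (n - k) else 0)"
proof -
  have "cp (a * y) n = (\<Sum>i\<le>n. (if i = k then a else 0) * cp y (n - i))"
    using cp_mult[of a y n] cp_hom[OF assms] by simp
  also have "\<dots> = (\<Sum>i\<in>{..n} \<inter> {k}. a * cp y (n - i))"
    by (rule sum.mono_neutral_cong_right) auto
  also have "\<dots> = (if k \<le> n then a * cp y (n - k) else 0)"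
    by (cases "k \<le> n") (auto simp: Int_absorb1)
  finally show ?thesis .
qed

lemma cp_mult0: "cp (x * y) 0 = cp x 0 * cp y 0"
  using cp_mult[of x y 0] by simp

lemma cp_one: "cp 1 i = (if i = 0 then 1 else 0)"
  using cp_hom[OF G1] by simp

definition core :: "'a set \<Rightarrow> 'a set" where
  "core P = {x. \<forall>i. cp x i \<in> P}"

lemma x_sum: "\<exists>N. x = (\<Sum>i<N. cp x i)"
  using cp_bound[of x] cp_sum by blast

lemma core_sub: assumes "is_ideal P" shows "core P \<subseteq> P"
proof
  fix x assume "x \<in> core P"
  obtain N where "x = (\<Sum>i<N. cp x i)" using x_sum by blast
  moreover have "(\<Sum>i<N. cp x i) \<in> P"
    by (rule ideal_sum[OF assms]) (use \<open>x \<in> core P\<close> in \<open>auto simp: core_def\<close>)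
  ultimately show "x \<in> P" by simp
qed

lemma hom_in_core: assumes "a \<in> G k" "a \<in> P" "is_ideal P" shows "a \<in> core P"
  unfolding core_def using cp_hom[OF assms(1)] assms(2) idealD(1)[OF assms(3)] by auto

lemma cp_in_core: assumes "x \<in> core P" "is_ideal P" shows "cp x i \<in> core P"
  using hom_in_core[OF cp_G] assms unfolding core_def by blast

lemma core_ideal: assumes "is_ideal P" shows "is_ideal (core P)"
  unfolding ideal_in_def
proof (intro conjI ballI)
  show "0 \<in> core P" unfolding core_def using cp_0 idealD(1)[OF assms] by simp
  show "x + y \<in> core P" if "x \<in> core P" "y \<in> core P" for x y
    using that idealD(2)[OF assms] unfolding core_def by (simp add: cp_add)
  show "- x \<in> core P" if "x \<in> core P" for x
    using that idealD(3)[OF assms] unfolding core_def by (simp add: cp_neg)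
  show "r * x \<in> core P" if "x \<in> core P" for r x
    using that unfolding core_def
    by (auto simp: cp_mult intro!: ideal_sum[OF assms] idealD(4)[OF assms])
qed auto

lemma core_mono: "P \<subseteq> Q \<Longrightarrow> core P \<subseteq> core Q"
  unfolding core_def by blast

lemma homog_sub_core:
  assumes "\<forall>x\<in>I. \<forall>i. cp x i \<in> I" "I \<subseteq> P" shows "I \<subseteq> core P"
  using assms unfolding core_def by blast

lemma core_prime: assumes "prime_ideal P" shows "prime_ideal (core P)"
proof (rule prime_idealI)
  have idP: "is_ideal P" using prime_idealD[OF assms] by blast
  show "is_ideal (core P)" using core_ideal[OF idP] .
  show "1 \<notin> core P" using core_sub[OF idP] prime_idealD(2)[OF assms] by blast
  fix a b assume ab: "a * b \<in> core P"
  show "a \<in> core P \<or> b \<in> core P"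
  proof (rule ccontr)
    assume "\<not> (a \<in> core P \<or> b \<in> core P)"
    then have "\<exists>i. cp a i \<notin> P" "\<exists>j. cp b j \<notin> P" unfolding core_def by auto
    define i0 where "i0 = (LEAST i. cp a i \<notin> P)"
    define j0 where "j0 = (LEAST j. cp b j \<notin> P)"
    have i0: "cp a i0 \<notin> P" "\<And>i. i < i0 \<Longrightarrow> cp a i \<in> P"
      unfolding i0_def using \<open>\<exists>i. cp a i \<notin> P\<close> LeastI_ex[of "\<lambda>i. cp a i \<notin> P"] not_less_Least by blast+
    have j0: "cp b j0 \<notin> P" "\<And>j. j < j0 \<Longrightarrow> cp b j \<in> P"
      unfolding j0_def using \<open>\<exists>j. cp b j \<notin> P\<close> LeastI_ex[of "\<lambda>j. cp b j \<notin> P"] not_less_Least by blast+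
    have "cp (a * b) (i0 + j0) \<notin> P"
      unfolding cp_mult
    proof (rule ideal_sum_notin[OF idP, where k=i0])
      show "cp a i0 * cp b (i0 + j0 - i0) \<notin> P"
        using i0(1) j0(1) prime_idealD(3)[OF assms] by auto
      show "\<forall>j\<in>{..i0 + j0} - {i0}. cp a j * cp b (i0 + j0 - j) \<in> P"
      proof
        fix j assume "j \<in> {..i0 + j0} - {i0}"
        then have "j < i0 \<or> (j > i0 \<and> i0 + j0 - j < j0)" by auto
        then show "cp a j * cp b (i0 + j0 - j) \<in> P"
          using i0(2) j0(2) idealD(4)[OF idP] ideal_multR[OF idP] by blast
      qed
    qed auto
    then show False using ab unfolding core_def by blast
  qed
qed

end


context gr begin

definition T :: "'a set \<Rightarrow> 'a \<Rightarrow> nat set" where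
  "T P x = {i. cp x i \<notin> P}"
definition tp where "tp P x = Max (T P x)"
definition bt where "bt P x = Min (T P x)"
definition ln where "ln P x = tp P x - bt P x"

context
  fixes P :: "'a set"
  assumes P: "prime_ideal P"
begin

lemma idP: "is_ideal P" using prime_idealD[OF P] by blast

lemma finT: "finite (T P x)"
proof -
  have "T P x \<subseteq> {i. cp x i \<noteq> 0}" unfolding T_def using idealD(1)[OF idP] by auto
  then show ?thesis using cp_fin finite_subset by blast
qed

lemma T_ne: "x \<notin> core P \<Longrightarrow> T P x \<noteq> {}"
  unfolding T_def core_def by auto

lemma T_mod: assumes "u - v \<in> core P" shows "T P u = T P v"
proof -
  have d: "cp u i - cp v i \<in> P" for i using assms unfolding core_def by (auto simp: cp_diff)
  have "cp u i \<in> P \<longleftrightarrow> cp v i \<in> P" for i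
  proof
    assume "cp u i \<in> P" then show "cp v i \<in> P"
      using ideal_diff[OF idP \<open>cp u i \<in> P\<close> d[of i]] by simp
  next
    assume "cp v i \<in> P" then show "cp u i \<in> P"
      using idealD(2)[OF idP \<open>cp v i \<in> P\<close> d[of i]] by simp
  qed
  then show ?thesis unfolding T_def by auto
qed

lemma ln_mod: "u - v \<in> core P \<Longrightarrow> ln P u = ln P v"
  unfolding ln_def tp_def bt_def using T_mod by simp

lemma tp_in: "x \<notin> core P \<Longrightarrow> tp P x \<in> T P x"
  unfolding tp_def using finT T_ne Max_in by blast
lemma bt_in: "x \<notin> core P \<Longrightarrow> bt P x \<in> T P x"
  unfolding bt_def using finT T_ne Min_in by blast
lemma tp_ge: "n \<in> T P x \<Longrightarrow> n \<le> tp P x"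
  unfolding tp_def using finT Max_ge by blast
lemma bt_le: "n \<in> T P x \<Longrightarrow> bt P x \<le> n"
  unfolding bt_def using finT Min_le by blast
lemma above_tp: "tp P x < n \<Longrightarrow> cp x n \<in> P"
  using tp_ge[of n x] unfolding T_def by fastforce
lemma below_bt: "n < bt P x \<Longrightarrow> cp x n \<in> P"
  using bt_le[of n x] unfolding T_def by fastforce
lemma bt_le_tp: "x \<notin> core P \<Longrightarrow> bt P x \<le> tp P x"
  using bt_le tp_in by blast

lemma tp_eqI: "n \<in> T P x \<Longrightarrow> (\<And>m. m \<in> T P x \<Longrightarrow> m \<le> n) \<Longrightarrow> tp P x = n"
  unfolding tp_def using finT by (intro Max_eqI) auto
lemma bt_eqI: "n \<in> T P x \<Longrightarrow> (\<And>m. m \<in> T P x \<Longrightarrow> n \<le> m) \<Longrightarrow> bt P x = n"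
  unfolding bt_def using finT by (intro Min_eqI) auto

lemma T_homL: assumes "a \<in> G k" "a \<notin> P"
  shows "n \<in> T P (a * y) \<longleftrightarrow> k \<le> n \<and> n - k \<in> T P y"
proof (cases "k \<le> n")
  case True
  have "a * cp y (n - k) \<in> P \<longleftrightarrow> cp y (n - k) \<in> P"
    using idealD(4)[OF idP, of "cp y (n - k)" a] prime_idealD(3)[OF P, of a "cp y (n - k)"] assms(2) by blast
  then show ?thesis unfolding T_def using cp_homL[OF assms(1), of y n] True by simp
next
  case False
  then show ?thesis unfolding T_def using cp_homL[OF assms(1), of y n] idealD(1)[OF idP] by simp
qed

lemma ln_homL: assumes "a \<in> G k" "a \<notin> P" "y \<notin> core P"
  shows "ln P (a * y) = ln P y"
proof -
  have t: "tp P (a * y) = tp P y + k"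
    by (rule tp_eqI) (use T_homL[OF assms(1,2)] tp_in[OF assms(3)] tp_ge in force)+
  have b: "bt P (a * y) = bt P y + k"
    by (rule bt_eqI) (use T_homL[OF assms(1,2)] bt_in[OF assms(3)] bt_le in force)+
  show ?thesis unfolding ln_def t b by simp
qed

lemma mult_core: assumes "g \<notin> core P" "x \<notin> core P"
  shows "tp P (g * x) = tp P g + tp P x" "bt P (g * x) = bt P g + bt P x"
proof -
  let ?tg = "tp P g" and ?tx = "tp P x" and ?bg = "bt P g" and ?bx = "bt P x"
  have Tg: "cp g ?tg \<notin> P" "cp g ?bg \<notin> P" using tp_in[OF assms(1)] bt_in[OF assms(1)] unfolding T_def by auto
  have Tx: "cp x ?tx \<notin> P" "cp x ?bx \<notin> P" using tp_in[OF assms(2)] bt_in[OF assms(2)] unfolding T_def by auto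
  have inP1: "cp g i * cp x j \<in> P" if "cp g i \<in> P \<or> cp x j \<in> P" for i j
    using that ideal_multR[OF idP] idealD(4)[OF idP] by blast
  have t1: "?tg + ?tx \<in> T P (g * x)"
    unfolding T_def mem_Collect_eq cp_mult
  proof (rule ideal_sum_notin[OF idP, where k="?tg"])
    show "cp g ?tg * cp x (?tg + ?tx - ?tg) \<notin> P" using Tg Tx prime_idealD(3)[OF P] by auto
    show "\<forall>j\<in>{..?tg + ?tx} - {?tg}. cp g j * cp x (?tg + ?tx - j) \<in> P"
    proof
      fix j assume "j \<in> {..?tg + ?tx} - {?tg}"
      then have "?tg < j \<or> ?tx < ?tg + ?tx - j" by auto
      then show "cp g j * cp x (?tg + ?tx - j) \<in> P" using inP1 above_tp by blast
    qed
  qed auto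
  have t2: "m \<le> ?tg + ?tx" if "m \<in> T P (g * x)" for m
  proof (rule ccontr)
    assume "\<not> m \<le> ?tg + ?tx"
    then have m: "?tg + ?tx < m" by simp
    have "\<forall>j\<in>{..m}. cp g j * cp x (m - j) \<in> P"
    proof
      fix j assume "j \<in> {..m}"
      then have "?tg < j \<or> ?tx < m - j" using m by auto
      then show "cp g j * cp x (m - j) \<in> P" using inP1 above_tp by blast
    qed
    then have "cp (g * x) m \<in> P" unfolding cp_mult by (intro ideal_sum[OF idP]) auto
    then show False using that unfolding T_def by simp
  qed
  show "tp P (g * x) = ?tg + ?tx" using tp_eqI t1 t2 by blast
  have b1: "?bg + ?bx \<in> T P (g * x)"
    unfolding T_def mem_Collect_eq cp_mult
  proof (rule ideal_sum_notin[OF idP, where k="?bg"])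
    show "cp g ?bg * cp x (?bg + ?bx - ?bg) \<notin> P" using Tg Tx prime_idealD(3)[OF P] by auto
    show "\<forall>j\<in>{..?bg + ?bx} - {?bg}. cp g j * cp x (?bg + ?bx - j) \<in> P"
    proof
      fix j assume "j \<in> {..?bg + ?bx} - {?bg}"
      then have "j < ?bg \<or> ?bg + ?bx - j < ?bx" by auto
      then show "cp g j * cp x (?bg + ?bx - j) \<in> P" using inP1 below_bt by blast
    qed
  qed auto
  have b2: "?bg + ?bx \<le> m" if "m \<in> T P (g * x)" for m
  proof (rule ccontr)
    assume m: "\<not> ?bg + ?bx \<le> m"
    have "\<forall>j\<in>{..m}. cp g j * cp x (m - j) \<in> P"
    proof
      fix j assume "j \<in> {..m}"
      then have "j < ?bg \<or> m - j < ?bx" using m by auto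
      then show "cp g j * cp x (m - j) \<in> P" using inP1 below_bt by blast
    qed
    then have "cp (g * x) m \<in> P" unfolding cp_mult by (intro ideal_sum[OF idP]) auto
    then show False using that unfolding T_def by simp
  qed
  show "bt P (g * x) = ?bg + ?bx" using bt_eqI b1 b2 by blast
qed

lemma core_subP: "core P \<subseteq> P" using core_sub[OF idP] .

lemma ln_pos: assumes "x \<in> P" "x \<notin> core P" shows "0 < ln P x"
proof (rule ccontr)
  assume "\<not> 0 < ln P x"
  then have eq: "tp P x = bt P x" using bt_le_tp[OF assms(2)] unfolding ln_def by simp
  define k where "k = tp P x"
  have Tk: "T P x = {k}"
  proof
    show "T P x \<subseteq> {k}" using tp_ge bt_le eq unfolding k_def by fastforce
    show "{k} \<subseteq> T P x" using tp_in[OF assms(2)] unfolding k_def by simp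
  qed
  have "x - cp x k \<in> core P"
    unfolding core_def
  proof (intro CollectI allI)
    fix i
    show "cp (x - cp x k) i \<in> P"
    proof (cases "i = k")
      case True
      then show ?thesis using cp_hom[OF cp_G[of x k]] idealD(1)[OF idP] by (simp add: cp_diff)
    next
      case False
      then have "cp x i \<in> P" using Tk unfolding T_def by auto
      then show ?thesis using False cp_hom[OF cp_G[of x k]] by (simp add: cp_diff)
    qed
  qed
  then have "x - cp x k \<in> P" using core_subP by blast
  then have "cp x k \<in> P" using ideal_diff[OF idP assms(1) \<open>x - cp x k \<in> P\<close>] by simp
  then show False using Tk unfolding T_def by auto
qed

lemma reduce:
  assumes x: "x \<in> P" "x \<notin> core P"
    and minl: "\<And>z. z \<in> P \<Longrightarrow> z \<notin> core P \<Longrightarrow> ln P x \<le> ln P z"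
  shows "y \<in> P \<Longrightarrow> \<exists>h k g. h \<in> G k \<and> h \<notin> P \<and> h * y - g * x \<in> core P"
proof (induction "ln P y" arbitrary: y rule: less_induct)
  case less
  show ?case
  proof (cases "y \<in> core P")
    case True
    then show ?thesis using G1 prime_idealD(2)[OF P] by (intro exI[of _ 1] exI[of _ 0] exI[of _ 0]) auto
  next
    case ycore: False
    let ?tx = "tp P x" and ?bx = "bt P x" and ?ty = "tp P y" and ?by = "bt P y"
    define a where "a = cp x ?tx"
    define b where "b = cp y ?ty"
    have aG: "a \<in> G ?tx" and bG: "b \<in> G ?ty" unfolding a_def b_def by (rule cp_G)+
    have anP: "a \<notin> P" using tp_in[OF x(2)] unfolding a_def T_def by simp
    define z where "z = a * y - b * x"
    have zP: "z \<in> P" unfolding z_def using less.prems x(1)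
      by (intro ideal_diff[OF idP] idealD(4)[OF idP])
    have key: "\<exists>h k g. h \<in> G k \<and> h \<notin> P \<and> h * z - g * x \<in> core P"
    proof (cases "z \<in> core P")
      case True
      then show ?thesis using G1 prime_idealD(2)[OF P] by (intro exI[of _ 1] exI[of _ 0] exI[of _ 0]) auto
    next
      case zc: False
      have cpz: "cp z n = cp (a * y) n - cp (b * x) n" for n unfolding z_def by (rule cp_diff)
      have hz: "cp z n \<in> P" if "\<not> (min (?by + ?tx) (?bx + ?ty) \<le> n \<and> n < ?tx + ?ty)" for n
      proof (cases "n = ?tx + ?ty")
        case True
        then have "cp z n = a * b - b * a" using cpz cp_homL[OF aG] cp_homL[OF bG] unfolding a_def b_def by simp
        then show ?thesis using idealD(1)[OF idP] by simp
      next
        case False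
        have c1: "cp (a * y) n \<in> P"
        proof (cases "?tx \<le> n")
          case True
          have "n - ?tx < ?by \<or> ?ty < n - ?tx" using that False True by auto
          then have "cp y (n - ?tx) \<in> P" using below_bt above_tp by blast
          then show ?thesis using True cp_homL[OF aG] idealD(4)[OF idP] by simp
        next
          case False then show ?thesis using cp_homL[OF aG] idealD(1)[OF idP] by simp
        qed
        have c2: "cp (b * x) n \<in> P"
        proof (cases "?ty \<le> n")
          case True
          have "n - ?ty < ?bx \<or> ?tx < n - ?ty" using that False True by auto
          then have "cp x (n - ?ty) \<in> P" using below_bt above_tp by blast
          then show ?thesis using True cp_homL[OF bG] idealD(4)[OF idP] by simp
        next
          case False then show ?thesis using cp_homL[OF bG] idealD(1)[OF idP] by simp
        qed
        show ?thesis using cpz ideal_diff[OF idP c1 c2] by simp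
      qed
      have Tz: "min (?by + ?tx) (?bx + ?ty) \<le> n \<and> n < ?tx + ?ty" if "n \<in> T P z" for n
        using hz that unfolding T_def by blast
      have tz: "min (?by + ?tx) (?bx + ?ty) \<le> bt P z" "tp P z < ?tx + ?ty"
        using Tz[OF bt_in[OF zc]] Tz[OF tp_in[OF zc]] by auto
      have lz: "ln P z \<le> tp P z - bt P z" unfolding ln_def by simp
      have bz: "bt P z \<le> tp P z" using bt_le_tp[OF zc] .
      have lx: "ln P x \<le> ln P y" using minl[OF less.prems ycore] .
      have lxd: "ln P x = ?tx - ?bx" "ln P y = ?ty - ?by" unfolding ln_def by simp_all
      have bxx: "?bx \<le> ?tx" using bt_le_tp[OF x(2)] .
      have byy: "?by \<le> ?ty" using bt_le_tp[OF ycore] .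
      have "ln P z < ln P y" using tz lz bz lx lxd bxx byy by linarith
      from less.hyps[OF this zP] show ?thesis .
    qed
    then obtain h k g where hkg: "h \<in> G k" "h \<notin> P" "h * z - g * x \<in> core P" by blast
    have "(h * a) * y - (h * b + g) * x = h * z - g * x" unfolding z_def by (simp add: algebra_simps)
    moreover have "h * a \<in> G (k + ?tx)" using Gmul[OF hkg(1) aG] .
    moreover have "h * a \<notin> P" using prime_idealD(3)[OF P, of h a] hkg(2) anP by blast
    ultimately show ?thesis using hkg(3) by metis
  qed
qed

lemma no_between:
  assumes Q: "prime_ideal Q" and cQ: "core P \<subset> Q" and QP: "Q \<subset> P"
  shows False
proof -
  have idQ: "is_ideal Q" using prime_idealD[OF Q] by blast
  have "\<exists>x. x \<in> P \<and> x \<notin> core P" using cQ QP by blast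
  then obtain x where x: "x \<in> P" "x \<notin> core P"
    and minl: "\<And>z. z \<in> P \<and> z \<notin> core P \<Longrightarrow> ln P x \<le> ln P z"
    using ex_has_least_nat[of "\<lambda>x. x \<in> P \<and> x \<notin> core P" _ "ln P"] by blast
  have minl': "\<And>z. z \<in> P \<Longrightarrow> z \<notin> core P \<Longrightarrow> ln P x \<le> ln P z" using minl by blast

  have lx: "0 < ln P x" using ln_pos[OF x] .
  have step: "y \<in> Q \<Longrightarrow> y \<notin> core P \<Longrightarrow> x \<in> Q" for y
  proof (induction "ln P y" arbitrary: y rule: less_induct)
    case less
    have yP: "y \<in> P" using less.prems QP by blast
    obtain h k g where hkg: "h \<in> G k" "h \<notin> P" "h * y - g * x \<in> core P" using reduce[OF x(1) x(2) minl' yP] by blast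
    have d: "h * y - g * x \<in> Q" using hkg(3) cQ by blast
    have hy: "h * y \<in> Q" using idealD(4)[OF idQ less.prems(1)] .
    have "g * x = h * y - (h * y - g * x)" by simp
    then have gx: "g * x \<in> Q" using ideal_diff[OF idQ hy d] by simp
    show "x \<in> Q"
    proof (rule ccontr)
      assume xQ: "x \<notin> Q"
      then have gQ: "g \<in> Q" using prime_idealD(3)[OF Q gx] by blast
      have gc: "g \<notin> core P"
      proof
        assume "g \<in> core P"
        then have "g * x \<in> core P" using ideal_multR[OF core_ideal[OF idP]] by blast
        then have "(h * y - g * x) + g * x \<in> core P" using idealD(2)[OF core_ideal[OF idP] hkg(3)] by blast
        then have "h * y \<in> core P" by simp
        then have "h \<in> core P \<or> y \<in> core P" using prime_idealD(3)[OF core_prime[OF P]] by blast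
        then show False using hkg(2) core_subP less.prems(2) by blast
      qed
      have "g * x - h * y = - (h * y - g * x)" by simp
      then have "g * x - h * y \<in> core P" using idealD(3)[OF core_ideal[OF idP] hkg(3)] by simp
      then have e1: "ln P (g * x) = ln P (h * y)" using ln_mod by blast
      have e2: "ln P (h * y) = ln P y" using ln_homL[OF hkg(1,2) less.prems(2)] .
      have e3: "ln P (g * x) = ln P g + ln P x"
        using mult_core[OF gc x(2)] bt_le_tp[OF gc] bt_le_tp[OF x(2)] unfolding ln_def by simp
      have "ln P g < ln P y" using e1 e2 e3 lx by simp
      from less.hyps[OF this gQ gc] show False using xQ by simp
    qed
  qed
  obtain y0 where "y0 \<in> Q" "y0 \<notin> core P" using cQ by blast
  then have xQ: "x \<in> Q" using step by blast
  have "P \<subseteq> Q"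
  proof
    fix y assume yP: "y \<in> P"
    obtain h k g where hkg: "h \<in> G k" "h \<notin> P" "h * y - g * x \<in> core P" using reduce[OF x(1) x(2) minl' yP] by blast
    have d: "h * y - g * x \<in> Q" using hkg(3) cQ by blast
    have gx: "g * x \<in> Q" using idealD(4)[OF idQ xQ] .
    have "h * y \<in> Q" using idealD(2)[OF idQ d gx] by simp
    then show "y \<in> Q" using prime_idealD(3)[OF Q] hkg(2) QP by blast
  qed
  then show False using QP by blast
qed

end
end


definition chain_to :: "nat \<Rightarrow> 'a::comm_ring_1 set \<Rightarrow> bool" where
  "chain_to k X \<longleftrightarrow> (\<exists>C. (\<forall>i\<le>k. prime_ideal (C i)) \<and> (\<forall>i<k. C i \<subset> C (Suc i)) \<and> C k = X)"

lemma chain0: "prime_ideal X \<Longrightarrow> chain_to 0 X"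
  unfolding chain_to_def by (intro exI[of _ "\<lambda>_. X"]) auto

lemma chain_prime: "chain_to k X \<Longrightarrow> prime_ideal X"
  unfolding chain_to_def by auto

lemma chain_ext:
  assumes "chain_to k Y" "Y \<subset> X" "prime_ideal X"
  shows "chain_to (Suc k) X"
proof -
  obtain C where C: "\<forall>i\<le>k. prime_ideal (C i)" "\<forall>i<k. C i \<subset> C (Suc i)" "C k = Y"
    using assms(1) unfolding chain_to_def by blast
  show ?thesis unfolding chain_to_def
  proof (intro exI[of _ "C(Suc k := X)"] conjI allI impI)
    fix i assume "i \<le> Suc k" then show "prime_ideal ((C(Suc k := X)) i)"
      using C(1) assms(3) by (cases "i = Suc k") auto
  next
    fix i assume i: "i < Suc k"
    show "(C(Suc k := X)) i \<subset> (C(Suc k := X)) (Suc i)"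
    proof (cases "i = k")
      case True then show ?thesis using C(3) assms(2) by simp
    next
      case False then show ?thesis using C(2) i by simp
    qed
  qed simp
qed

lemma chain_trunc:
  assumes "chain_to k X" "j \<le> k"
  shows "chain_to j X"
proof -
  obtain C where C: "\<forall>i\<le>k. prime_ideal (C i)" "\<forall>i<k. C i \<subset> C (Suc i)" "C k = X"
    using assms(1) unfolding chain_to_def by blast
  show ?thesis unfolding chain_to_def
    by (intro exI[of _ "\<lambda>i. C (i + (k - j))"]) (use C assms(2) in auto)
qed

lemma chain_le_dim:
  assumes "chain_to k (X :: 'a::comm_ring_1 set)" "krull_dim TYPE('a) = enat d"
  shows "k \<le> d"
proof -
  obtain C :: "nat \<Rightarrow> 'a set" where C: "\<forall>i\<le>k. prime_ideal (C i)" "\<forall>i<k. C i \<subset> C (Suc i)"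
    using assms(1) unfolding chain_to_def by blast
  have "enat k \<in> {enat n | n. \<exists>C :: nat \<Rightarrow> 'a set.
      (\<forall>i\<le>n. prime_ideal (C i)) \<and> (\<forall>i<n. C i \<subset> C (Suc i))}" using C by blast
  then have "enat k \<le> krull_dim TYPE('a)" unfolding krull_dim_def by (rule Sup_upper)
  then show ?thesis using assms(2) by simp
qed

context gr begin

definition E :: "'a set \<Rightarrow> 'a set" where "E I = {x. cp x 0 \<in> I}"

lemma ideal0_one: assumes "ideal_in (G 0) I" "1 \<in> I" shows "I = G 0"
proof
  show "I \<subseteq> G 0" using assms(1) unfolding ideal_in_def by blast
  show "G 0 \<subseteq> I"
  proof
    fix c assume "c \<in> G 0"
    then have "c * 1 \<in> I" using assms unfolding ideal_in_def by blast
    then show "c \<in> I" by simp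
  qed
qed

lemma E_prime:
  assumes I: "ideal_in (G 0) I" "1 \<notin> I" "\<And>a b. a \<in> G 0 \<Longrightarrow> b \<in> G 0 \<Longrightarrow> a * b \<in> I \<Longrightarrow> a \<in> I \<or> b \<in> I"
  shows "prime_ideal (E I)"
proof (rule prime_idealI)
  have I0: "0 \<in> I" "\<And>x y. x \<in> I \<Longrightarrow> y \<in> I \<Longrightarrow> x + y \<in> I" "\<And>x. x \<in> I \<Longrightarrow> - x \<in> I"
    "\<And>r x. r \<in> G 0 \<Longrightarrow> x \<in> I \<Longrightarrow> r * x \<in> I"
    using I(1) unfolding ideal_in_def by blast+
  show "is_ideal (E I)" unfolding ideal_in_def E_def
    using I0 by (auto simp: cp_0 cp_add cp_neg cp_mult0 cp_G)
  show "1 \<notin> E I" unfolding E_def using I(2) by (simp add: cp_one)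
  fix a b assume "a * b \<in> E I"
  then show "a \<in> E I \<or> b \<in> E I" unfolding E_def using I(3)[OF cp_G cp_G] by (simp add: cp_mult0)
qed

lemma E_mono: "I \<subseteq> J \<Longrightarrow> E I \<subseteq> E J" unfolding E_def by auto

lemma core_chain: "chain_to n P \<Longrightarrow> chain_to (n - 1) (core P)"
proof (induction n arbitrary: P)
  case 0
  then show ?case using chain0[OF core_prime[OF chain_prime]] by simp
next
  case (Suc n)
  obtain C where C: "\<forall>i\<le>Suc n. prime_ideal (C i)" "\<forall>i<Suc n. C i \<subset> C (Suc i)" "C (Suc n) = P"
    using Suc.prems unfolding chain_to_def by blast
  define Q where "Q = C n"
  have cQ: "chain_to n Q" unfolding chain_to_def Q_def by (intro exI[of _ C]) (use C in auto)
  have QP: "Q \<subset> P" unfolding Q_def using C by auto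
  have Pp: "prime_ideal P" using chain_prime[OF Suc.prems] .
  have Qp: "prime_ideal Q" using chain_prime[OF cQ] .
  have idQ: "is_ideal Q" and idP: "is_ideal P" using prime_idealD Pp Qp by blast+
  have cPp: "prime_ideal (core P)" using core_prime[OF Pp] .
  show ?case
  proof (cases "core Q = Q")
    case True
    have "Q \<subseteq> core P"
      by (rule homog_sub_core) (use True cp_in_core[OF _ idQ] QP in auto)
    then show ?thesis
    proof (cases "Q = core P")
      case True then show ?thesis using cQ by simp
    next
      case False
      then have "chain_to (Suc n) (core P)" using chain_ext[OF cQ _ cPp] \<open>Q \<subseteq> core P\<close> by blast
      then show ?thesis using chain_trunc by fastforce
    qed
  next
    case False
    have ih: "chain_to (n - 1) (core Q)" using Suc.IH[OF cQ] .
    have sub: "core Q \<subseteq> core P" using core_mono QP by blast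
    have ne: "core Q \<noteq> core P"
    proof
      assume eq: "core Q = core P"
      have "core P \<subset> Q" using eq core_sub[OF idQ] False by blast
      then show False using no_between[OF Pp Qp _ QP] by blast
    qed
    have "chain_to (Suc (n - 1)) (core P)" using chain_ext[OF ih _ cPp] sub ne by blast
    then show ?thesis using chain_trunc[of "Suc (n - 1)" "core P" n] by simp
  qed
qed

end


section \<open>Localization\<close>

context
  fixes S :: "'a::comm_ring_1 set" and \<phi> :: "'a \<Rightarrow> 'b::comm_ring_1"
  assumes loc: "is_localization S \<phi>"
begin

lemma locD: "\<phi> 1 = 1 \<and> (\<forall>x y. \<phi> (x + y) = \<phi> x + \<phi> y) \<and> (\<forall>x y. \<phi> (x * y) = \<phi> x * \<phi> y) \<and>
     (\<forall>s\<in>S. \<phi> s dvd 1) \<and> (\<forall>b. \<exists>r. \<exists>s\<in>S. \<phi> s * b = \<phi> r) \<and>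
     (\<forall>r. \<phi> r = 0 \<longleftrightarrow> (\<exists>s\<in>S. s * r = 0))"
  using loc unfolding is_localization_def by blast

lemma phi1: "\<phi> 1 = 1" using locD by blast
lemma phiadd: "\<phi> (x + y) = \<phi> x + \<phi> y" using locD by metis
lemma phimul: "\<phi> (x * y) = \<phi> x * \<phi> y" using locD by metis
lemma phiunit: "s \<in> S \<Longrightarrow> \<phi> s dvd 1" using locD by blast
lemma phisurj: "\<exists>r. \<exists>s\<in>S. \<phi> s * b = \<phi> r" using locD by blast

lemma phi0: "\<phi> 0 = 0" using phiadd[of 0 0] by simp
lemma phineg: "\<phi> (- x) = - \<phi> x" using phiadd[of x "-x"] phi0 by (metis add.commute eq_neg_iff_add_eq_0 add.right_inverse)
lemma phisum: "finite K \<Longrightarrow> \<phi> (sum f K) = (\<Sum>i\<in>K. \<phi> (f i))"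
  by (induction K rule: finite_induct) (auto simp: phi0 phiadd)

lemma unit_notin: assumes "prime_ideal Q" "s \<in> S" shows "\<phi> s \<notin> Q"
proof
  assume "\<phi> s \<in> Q"
  obtain u where "1 = \<phi> s * u" using phiunit[OF assms(2)] by (auto elim: dvdE)
  then have "1 \<in> Q" using ideal_multR[OF prime_idealD(1)[OF assms(1)] \<open>\<phi> s \<in> Q\<close>] by metis
  then show False using prime_idealD(2)[OF assms(1)] by simp
qed

lemma pre_prime: assumes "prime_ideal Q" shows "prime_ideal (\<phi> -` Q)" "\<phi> -` Q \<inter> S = {}"
proof -
  have idQ: "is_ideal Q" using prime_idealD[OF assms] by blast
  show "prime_ideal (\<phi> -` Q)"
  proof (rule prime_idealI)
    show "is_ideal (\<phi> -` Q)" unfolding ideal_in_def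
      using idealD[OF idQ] by (auto simp: phi0 phiadd phineg phimul)
    show "1 \<notin> \<phi> -` Q" using prime_idealD(2)[OF assms] by (simp add: phi1)
    show "a * b \<in> \<phi> -` Q \<Longrightarrow> a \<in> \<phi> -` Q \<or> b \<in> \<phi> -` Q" for a b
      using prime_idealD(3)[OF assms] by (simp add: phimul)
  qed
  show "\<phi> -` Q \<inter> S = {}" using unit_notin[OF assms] by blast
qed

lemma pre_strict: assumes "prime_ideal Q1" "prime_ideal Q2" "Q1 \<subset> Q2"
  shows "\<phi> -` Q1 \<subset> \<phi> -` Q2"
proof -
  obtain b where b: "b \<in> Q2" "b \<notin> Q1" using assms(3) by blast
  obtain r s where rs: "s \<in> S" "\<phi> s * b = \<phi> r" using phisurj by blast
  have "\<phi> r \<in> Q2" using rs(2) idealD(4)[OF prime_idealD(1)[OF assms(2)] b(1)] by metis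
  moreover have "\<phi> r \<notin> Q1"
    using rs prime_idealD(3)[OF assms(1), of "\<phi> s" b] unit_notin[OF assms(1) rs(1)] b(2) by auto
  ultimately show ?thesis using assms(3) by blast
qed

lemma pre_chain:
  assumes "\<forall>i\<le>n. prime_ideal (C i)" "\<forall>i<n. C i \<subset> C (Suc i)"
  shows "chain_to n (\<phi> -` C n)"
  unfolding chain_to_def
  by (intro exI[of _ "\<lambda>i. \<phi> -` C i"]) (use assms pre_prime pre_strict in auto)

end

context gr begin

lemma ideal0D: assumes "ideal_in (G 0) I"
  shows "I \<subseteq> G 0" "0 \<in> I" "\<And>x y. x \<in> I \<Longrightarrow> y \<in> I \<Longrightarrow> x + y \<in> I" "\<And>x. x \<in> I \<Longrightarrow> - x \<in> I"
    "\<And>r x. r \<in> G 0 \<Longrightarrow> x \<in> I \<Longrightarrow> r * x \<in> I"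
  using assms unfolding ideal_in_def by blast+

lemma max0_prime:
  assumes m: "maximal_ideal_in (G 0) m" and ab: "a \<in> G 0" "b \<in> G 0" "a * b \<in> m"
  shows "a \<in> m \<or> b \<in> m"
proof (rule ccontr)
  assume "\<not> (a \<in> m \<or> b \<in> m)"
  then have a: "a \<notin> m" and bn: "b \<notin> m" by auto
  have im: "ideal_in (G 0) m" using m unfolding maximal_ideal_in_def by blast
  note mD = ideal0D[OF im]
  define J where "J = {x + a * r | x r. x \<in> m \<and> r \<in> G 0}"
  have aG: "a * r \<in> G 0" if "r \<in> G 0" for r using Gmul[OF ab(1) that] by simp
  have "ideal_in (G 0) J" unfolding ideal_in_def
  proof (intro conjI ballI)
    show "J \<subseteq> G 0" unfolding J_def using mD(1) aG Gadd by blast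
    show "0 \<in> J" unfolding J_def using mD(2) G0[of 0] by force
    show "x + y \<in> J" if xy: "x \<in> J" "y \<in> J" for x y
    proof -
      obtain x1 r1 y1 r2 where "x = x1 + a * r1" "y = y1 + a * r2" "x1 \<in> m" "y1 \<in> m" "r1 \<in> G 0" "r2 \<in> G 0"
        using xy unfolding J_def by blast
      then show ?thesis unfolding J_def
        by (intro CollectI exI[of _ "x1 + y1"] exI[of _ "r1 + r2"]) (auto simp: algebra_simps mD(3) Gadd)
    qed
    show "- x \<in> J" if xJ: "x \<in> J" for x
    proof -
      obtain x1 r1 where "x = x1 + a * r1" "x1 \<in> m" "r1 \<in> G 0" using xJ unfolding J_def by blast
      then show ?thesis unfolding J_def
        by (intro CollectI exI[of _ "- x1"] exI[of _ "- r1"]) (auto simp: mD(4) Gneg)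
    qed
    show "r * x \<in> J" if rx: "r \<in> G 0" "x \<in> J" for r x
    proof -
      obtain x1 r1 where "x = x1 + a * r1" "x1 \<in> m" "r1 \<in> G 0" using rx(2) unfolding J_def by blast
      then show ?thesis unfolding J_def using rx(1) Gmul[of r 0 r1 0]
        by (intro CollectI exI[of _ "r * x1"] exI[of _ "r * r1"]) (auto simp: algebra_simps mD(5))
    qed
  qed
  moreover have "m \<subseteq> J" unfolding J_def using G0[of 0] by force
  moreover have "a \<in> J" unfolding J_def using mD(2) G1 by force
  ultimately have "J = G 0" using m a unfolding maximal_ideal_in_def by blast
  then obtain x r where xr: "1 = x + a * r" "x \<in> m" "r \<in> G 0" using G1 unfolding J_def by blast
  have "b = b * x + r * (a * b)" using xr(1) by (metis mult.commute distrib_left mult.left_commute mult_1_right)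
  moreover have "b * x \<in> m" using mD(5)[OF ab(2) xr(2)] .
  moreover have "r * (a * b) \<in> m" using mD(5)[OF xr(3) ab(3)] .
  ultimately have "b \<in> m" using mD(3) by metis
  then show False using bn by simp
qed

lemma exists_max0:
  assumes J: "ideal_in (G 0) J" "J \<noteq> G 0"
  shows "\<exists>m. maximal_ideal_in (G 0) m \<and> J \<subseteq> m"
proof -
  define A where "A = {I. ideal_in (G 0) I \<and> J \<subseteq> I \<and> 1 \<notin> I}"
  have JA: "J \<in> A" unfolding A_def using J ideal0_one by blast
  have "\<forall>C\<in>chains A. \<exists>U\<in>A. \<forall>X\<in>C. X \<subseteq> U"
  proof
    fix C assume C: "C \<in> chains A"
    show "\<exists>U\<in>A. \<forall>X\<in>C. X \<subseteq> U"
    proof (cases "C = {}")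
      case True then show ?thesis using JA by blast
    next
      case False
      then obtain I0 where I0: "I0 \<in> C" by blast
      have CA: "C \<subseteq> A" and ch: "\<forall>X\<in>C. \<forall>Y\<in>C. X \<subseteq> Y \<or> Y \<subseteq> X"
        using C unfolding chains_def chain_subset_def by blast+
      have "\<Union>C \<in> A" unfolding A_def
      proof (intro CollectI conjI)
        show "J \<subseteq> \<Union>C" using I0 CA unfolding A_def by blast
        show "1 \<notin> \<Union>C" using CA unfolding A_def by blast
        show "ideal_in (G 0) (\<Union>C)" unfolding ideal_in_def
        proof (intro conjI ballI)
          show "\<Union>C \<subseteq> G 0" using CA unfolding A_def ideal_in_def by blast
          show "0 \<in> \<Union>C" using I0 CA unfolding A_def ideal_in_def by blast
          show "x + y \<in> \<Union>C" if xy: "x \<in> \<Union>C" "y \<in> \<Union>C" for x y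
          proof -
            obtain X Y where XY: "X \<in> C" "Y \<in> C" "x \<in> X" "y \<in> Y" using xy by blast
            then have "X \<subseteq> Y \<or> Y \<subseteq> X" using ch by blast
            then show ?thesis using XY CA unfolding A_def ideal_in_def by blast
          qed
          show "- x \<in> \<Union>C" if "x \<in> \<Union>C" for x using that CA unfolding A_def ideal_in_def by blast
          show "r * x \<in> \<Union>C" if "r \<in> G 0" "x \<in> \<Union>C" for r x using that CA unfolding A_def ideal_in_def by blast
        qed
      qed
      then show ?thesis by blast
    qed
  qed
  then obtain M where M: "M \<in> A" "\<forall>X\<in>A. M \<subseteq> X \<longrightarrow> X = M" using Zorn_Lemma2 by blast
  have "maximal_ideal_in (G 0) M" unfolding maximal_ideal_in_def
  proof (intro conjI allI impI)
    show "ideal_in (G 0) M" using M(1) unfolding A_def by blast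
    show "M \<noteq> G 0" using M(1) G1 unfolding A_def by blast
    fix K assume K: "ideal_in (G 0) K \<and> M \<subseteq> K"
    show "K = M \<or> K = G 0"
    proof (cases "1 \<in> K")
      case True then show ?thesis using ideal0_one K by blast
    next
      case False then have "K \<in> A" using K M(1) unfolding A_def by blast
      then show ?thesis using M(2) K by blast
    qed
  qed
  then show ?thesis using M(1) unfolding A_def by blast
qed

end


context gr begin

lemma E_ideal: assumes "ideal_in (G 0) I" shows "is_ideal (E I)"
  using ideal0D[OF assms] unfolding ideal_in_def E_def
  by (auto simp: cp_0 cp_add cp_neg cp_mult0 cp_G)

lemma p_ideal: assumes "is_ideal P" shows "ideal_in (G 0) (P \<inter> G 0)"
  unfolding ideal_in_def using idealD[OF assms] G0 Gadd Gneg Gmul[of _ 0 _ 0] by auto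

lemma prime0: assumes "prime_ideal P"
  shows "a \<in> G 0 \<Longrightarrow> b \<in> G 0 \<Longrightarrow> a * b \<in> P \<inter> G 0 \<Longrightarrow> a \<in> P \<inter> G 0 \<or> b \<in> P \<inter> G 0"
  using prime_idealD(3)[OF assms] by blast

lemma nonmax_ext:
  assumes P: "prime_ideal P" and nm: "\<not> maximal_ideal_in (G 0) (P \<inter> G 0)"
  shows "\<exists>J. ideal_in (G 0) J \<and> P \<inter> G 0 \<subseteq> J \<and> J \<noteq> P \<inter> G 0 \<and> J \<noteq> G 0"
proof -
  have "P \<inter> G 0 \<noteq> G 0" using G1 prime_idealD(2)[OF P] by blast
  then show ?thesis using nm p_ideal[OF prime_idealD(1)[OF P]] unfolding maximal_ideal_in_def by blast
qed

lemma up_bound: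
  assumes ch: "chain_to n P" and nm: "\<not> maximal_ideal_in (G 0) (P \<inter> G 0)"
    and dim: "krull_dim TYPE('a) = enat d"
  shows "Suc n \<le> d"
proof -
  have Pp: "prime_ideal P" using chain_prime[OF ch] .
  have idP: "is_ideal P" using prime_idealD(1)[OF Pp] .
  define p where "p = P \<inter> G 0"
  obtain J where J: "ideal_in (G 0) J" "p \<subseteq> J" "J \<noteq> p" "J \<noteq> G 0"
    using nonmax_ext[OF Pp nm] unfolding p_def by blast
  obtain m where m: "maximal_ideal_in (G 0) m" "J \<subseteq> m" using exists_max0[OF J(1,4)] by blast
  have im: "ideal_in (G 0) m" using m(1) unfolding maximal_ideal_in_def by blast
  have m1: "1 \<notin> m" using m(1) ideal0_one[OF im] unfolding maximal_ideal_in_def by blast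
  have Em: "prime_ideal (E m)" using E_prime[OF im m1 max0_prime[OF m(1)]] .
  have ip: "ideal_in (G 0) p" unfolding p_def using p_ideal[OF idP] .
  have p1: "1 \<notin> p" unfolding p_def using prime_idealD(2)[OF Pp] by blast
  have Ep: "prime_ideal (E p)" using E_prime[OF ip p1] prime0[OF Pp] unfolding p_def by blast
  obtain z where z: "z \<in> J" "z \<notin> p" using J(2,3) by blast
  have zG: "z \<in> G 0" using z(1) ideal0D(1)[OF J(1)] by blast
  have cpz: "cp z 0 = z" using cp_hom[OF zG] by simp
  have pm: "E p \<subset> E m"
  proof -
    have "E p \<subseteq> E m" using E_mono J(2) m(2) by blast
    moreover have "z \<in> E m" "z \<notin> E p" unfolding E_def using cpz z m(2) by auto
    ultimately show ?thesis by blast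
  qed
  have coreE: "core P \<subseteq> E p" unfolding core_def E_def p_def using cp_G by auto
  show ?thesis
  proof (cases "core P = P")
    case True
    have "P \<subset> E m" using coreE pm True by blast
    then have "chain_to (Suc n) (E m)" using chain_ext[OF ch _ Em] by blast
    then show ?thesis using chain_le_dim[OF _ dim] by blast
  next
    case False
    have "core P \<noteq> E p"
    proof
      assume eq: "core P = E p"
      have "P \<subseteq> E p"
      proof
        fix x assume xP: "x \<in> P"
        have "x - cp x 0 \<in> E p" unfolding E_def using ideal0D(2)[OF ip] cp_hom[OF cp_G[of x 0]]
          by (simp add: cp_diff)
        then have "x - cp x 0 \<in> P" using eq core_sub[OF idP] by blast
        then have "cp x 0 \<in> P" using ideal_diff[OF idP xP] by force
        then show "x \<in> E p" unfolding E_def p_def using cp_G by blast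
      qed
      then have "P = core P" using eq core_sub[OF idP] by blast
      then show False using False by simp
    qed
    then have "core P \<subset> E p" using coreE by blast
    have c1: "chain_to (n - 1) (core P)" using core_chain[OF ch] .
    have "chain_to (Suc (n - 1)) (E p)" using chain_ext[OF c1 \<open>core P \<subset> E p\<close> Ep] .
    then have "chain_to (Suc (Suc (n - 1))) (E m)" using chain_ext[OF _ pm Em] by blast
    then have "chain_to (Suc n) (E m)" using chain_trunc[of "Suc (Suc (n - 1))" "E m" "Suc n"] by simp
    then show ?thesis using chain_le_dim[OF _ dim] by blast
  qed
qed

lemma dim_pos: assumes dim: "krull_dim TYPE('a) = enat d" shows "1 \<le> d"
proof -
  have i0: "ideal_in (G 0) {0}" unfolding ideal_in_def using G0 by auto
  have "prime_ideal (E {0})" by (rule E_prime[OF i0]) auto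
  moreover have "prime_ideal ({0} :: 'a set)"
  proof -
    have "(1::'a) \<notin> {0}" by simp
    then have "{0::'a} \<noteq> UNIV" by blast
    then show ?thesis unfolding prime_ideal_def ideal_in_def by auto
  qed
  moreover have "{0} \<subset> E {0}"
  proof -
    obtain i where i: "i \<ge> 1" "G i \<noteq> {0}" using Gnontriv by blast
    then obtain y where "y \<in> G i" "y \<noteq> 0" using G0[of i] by blast
    then have "y \<in> E {0}" unfolding E_def using cp_hom[of y i] i(1) by simp
    moreover have "0 \<in> E {0}" unfolding E_def by (simp add: cp_0)
    ultimately show ?thesis using \<open>y \<noteq> 0\<close> by blast
  qed
  ultimately have "chain_to (Suc 0) (E {0})" using chain_ext[OF chain0] by blast
  then show ?thesis using chain_le_dim[OF _ dim] by simp
qed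

end


theorem mainTheorem1:
  fixes G :: "nat \<Rightarrow> 'a::idom set"
    and S :: "'a set"
    and \<phi> :: "'a \<Rightarrow> 'b::comm_ring_1"
    and d :: nat
  assumes graded: "graded_ring G"
    and noeth: "noetherian_ring TYPE('a)"
    and dim: "krull_dim TYPE('a) = enat d"
    and mult: "multiplicative_set S"
    and S_sub: "S \<subseteq> G 0"
    and S_meets: "\<And>m. maximal_ideal_in (G 0) m \<Longrightarrow> S \<inter> m \<noteq> {}"
    and loc: "is_localization S \<phi>"
  shows "(\<forall>M. maximal_ideal M \<longrightarrow>
            \<not> (homogeneous_ideal (\<lambda>i. loc_set S \<phi> (G i)) (loc_set S \<phi> M)
               \<and> maximal_ideal (loc_set S \<phi> M)))
         \<and> krull_dim TYPE('b) < enat d"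
proof -
  interpret gr G by unfold_locales (rule graded)
  have S1: "1 \<in> S" using mult unfolding multiplicative_set_def by blast
  have part1: "\<not> (homogeneous_ideal (\<lambda>i. loc_set S \<phi> (G i)) (loc_set S \<phi> M)
               \<and> maximal_ideal (loc_set S \<phi> M))" if M: "maximal_ideal M" for M
  proof
    assume H: "homogeneous_ideal (\<lambda>i. loc_set S \<phi> (G i)) (loc_set S \<phi> M)
               \<and> maximal_ideal (loc_set S \<phi> M)"
    define L where "L = loc_set S \<phi> M"
    have idL: "is_ideal L" and LU: "L \<noteq> UNIV" using H unfolding L_def maximal_ideal_in_def by blast+
    have L1: "1 \<notin> L"
    proof
      assume "1 \<in> L"
      then have "\<forall>r. r * 1 \<in> L" using idealD(4)[OF idL] by blast
      then show False using LU by auto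
    qed
    have unitL: "\<phi> s \<notin> L" if sS: "s \<in> S" for s
    proof
      assume "\<phi> s \<in> L"
      obtain u where "1 = \<phi> s * u" using phiunit[OF loc sS] by (auto elim: dvdE)
      then have "1 \<in> L" using ideal_multR[OF idL \<open>\<phi> s \<in> L\<close>] by metis
      then show False using L1 by simp
    qed
    define P where "P = \<phi> -` L"
    have idP: "is_ideal P" unfolding P_def ideal_in_def
      using idealD[OF idL] by (auto simp: phi0[OF loc] phiadd[OF loc] phineg[OF loc] phimul[OF loc])
    have idM: "is_ideal M" using M unfolding maximal_ideal_in_def by blast
    have MP: "M \<subseteq> P" unfolding P_def L_def loc_set_def using S1 by (force simp: phi1[OF loc])
    have "1 \<notin> P" using L1 unfolding P_def by (simp add: phi1[OF loc])
    then have "P \<noteq> UNIV" by blast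
    then have PM: "P = M" using M MP idP unfolding maximal_ideal_in_def by blast
    have Mhom: "cp x i \<in> M" if xM: "x \<in> M" for x i
    proof -
      obtain N where N: "\<forall>i\<ge>N. cp x i = 0" using cp_bound by blast
      have hd: "hom_decomp (\<lambda>i. loc_set S \<phi> (G i)) (\<phi> x) (\<lambda>i. \<phi> (cp x i))"
        unfolding hom_decomp_def
      proof (intro conjI allI)
        show "\<phi> (cp x i) \<in> loc_set S \<phi> (G i)" for i
          unfolding loc_set_def using S1 cp_G by (force simp: phi1[OF loc])
        have z: "\<forall>i\<ge>N. \<phi> (cp x i) = 0" using N phi0[OF loc] by simp
        show "finite {i. \<phi> (cp x i) \<noteq> 0}" using supp_sub[OF z] finite_subset finite_lessThan by blast
        have "\<phi> x = \<phi> (\<Sum>i<N. cp x i)" using cp_sum[OF N] by simp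
        also have "\<dots> = (\<Sum>i<N. \<phi> (cp x i))" by (rule phisum[OF loc]) simp
        finally have "\<phi> x = (\<Sum>i<N. \<phi> (cp x i))" .
        then show "\<phi> x = (\<Sum>i\<in>{i. \<phi> (cp x i) \<noteq> 0}. \<phi> (cp x i))" using sum_supp_eq[OF z] by simp
      qed
      have "\<phi> x \<in> L" using xM MP unfolding P_def by blast
      then have "\<phi> (cp x i) \<in> L" using H hd unfolding homogeneous_ideal_def L_def by blast
      then show ?thesis using PM unfolding P_def by blast
    qed
    define p where "p = M \<inter> G 0"
    have "S \<inter> p = {}" using unitL PM unfolding p_def P_def by blast
    then have nm: "\<not> maximal_ideal_in (G 0) p" using S_meets by blast
    have ip: "ideal_in (G 0) p" unfolding p_def using p_ideal[OF idM] .
    have "1 \<notin> M" using L1 PM unfolding P_def by (auto simp: phi1[OF loc])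
    then have "p \<noteq> G 0" unfolding p_def using G1 by blast
    then obtain J where J: "ideal_in (G 0) J" "p \<subseteq> J" "J \<noteq> p" "J \<noteq> G 0"
      using nm ip unfolding maximal_ideal_in_def by blast
    have "M \<subseteq> E p" unfolding E_def p_def using Mhom cp_G by blast
    moreover have "E p \<subseteq> E J" using E_mono J(2) by blast
    ultimately have ME: "M \<subseteq> E J" by blast
    have EJ1: "1 \<notin> E J" unfolding E_def using J(4) ideal0_one[OF J(1)] by (auto simp: cp_one)
    obtain z where z: "z \<in> J" "z \<notin> p" using J(2,3) by blast
    have zG: "z \<in> G 0" using z(1) ideal0D(1)[OF J(1)] by blast
    have "z \<in> E J" "z \<notin> M" unfolding E_def using cp_hom[OF zG] z zG unfolding p_def by auto
    then have "E J \<noteq> M" by blast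
    moreover have "E J \<noteq> UNIV" using EJ1 by blast
    ultimately show False using M ME E_ideal[OF J(1)] unfolding maximal_ideal_in_def by blast
  qed
  have bound: "Suc n \<le> d" if C: "\<forall>i\<le>n. prime_ideal (C i)" "\<forall>i<n. C i \<subset> C (Suc i)"
    for n and C :: "nat \<Rightarrow> 'b set"
  proof -
    have ch: "chain_to n (\<phi> -` C n)" using pre_chain[OF loc C] .
    have "\<phi> -` C n \<inter> S = {}" using pre_prime(2)[OF loc] C(1) by blast
    then have "\<not> maximal_ideal_in (G 0) (\<phi> -` C n \<inter> G 0)" using S_meets by blast
    then show ?thesis using up_bound[OF ch _ dim] by blast
  qed
  have d1: "1 \<le> d" using dim_pos[OF dim] .
  have "krull_dim TYPE('b) \<le> enat (d - 1)"
    unfolding krull_dim_def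
  proof (rule Sup_least)
    fix x assume "x \<in> {enat n | n. \<exists>C :: nat \<Rightarrow> 'b set.
      (\<forall>i\<le>n. prime_ideal (C i)) \<and> (\<forall>i<n. C i \<subset> C (Suc i))}"
    then obtain n C where nC: "x = enat n" "\<forall>i\<le>n. prime_ideal ((C :: nat \<Rightarrow> 'b set) i)" "\<forall>i<n. C i \<subset> C (Suc i)"
      by blast
    have "Suc n \<le> d" using bound[OF nC(2,3)] .
    then show "x \<le> enat (d - 1)" using nC(1) by simp
  qed
  also have "\<dots> < enat d" using d1 by simp
  finally show ?thesis using part1 by blast
qed


end
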